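(* Let $k\ge 2$ be an integer. For every real $r$, the polynomial $x^k-x^{k-1}-1$ has at most two complex roots $z$ with $|z|=r$. *)

theory Defs
  imports "HOL-Analysis.Analysis"
begin

end

theory Submission
  imports Defs
begin

lemma two_circles:
  fixes r s :: real
  shows "{z :: complex. cmod z = r \<and> cmod (z - 1) = s} \<subseteq>
     {Complex ((r^2 - s^2 + 1)/2) (sqrt (r^2 - ((r^2 - s^2 + 1)/2)^2)),
      Complex ((r^2 - s^2 + 1)/2) (- sqrt (r^2 - ((r^2 - s^2 + 1)/2)^2))}"
proof
  fix z :: complex assume "z \<in> {z. cmod z = r \<and> cmod (z - 1) = s}"
  then have h1: "cmod z = r" and h2: "cmod (z - 1) = s" by auto
  obtain a b where z: "z = Complex a b" by (cases z)
  have e1: "a^2 + b^2 = r^2" using h1 z by (auto simp: cmod_def)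
  have e2: "(a-1)^2 + b^2 = s^2" using h2 z by (auto simp: cmod_def)
  have ha: "a = (r^2 - s^2 + 1)/2" using e1 e2 by (simp add: power2_eq_square algebra_simps)
  have hb: "b^2 = r^2 - ((r^2 - s^2 + 1)/2)^2" using e1 ha by simp
  have "b = sqrt (r^2 - ((r^2 - s^2 + 1)/2)^2) \<or> b = - sqrt (r^2 - ((r^2 - s^2 + 1)/2)^2)"
    using hb by (metis real_sqrt_abs abs_if neg_equal_iff_equal minus_minus)
  then show "z \<in> {Complex ((r^2 - s^2 + 1)/2) (sqrt (r^2 - ((r^2 - s^2 + 1)/2)^2)),
      Complex ((r^2 - s^2 + 1)/2) (- sqrt (r^2 - ((r^2 - s^2 + 1)/2)^2))}"
    using z ha by auto
qed

theorem mainTheorem5: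
  fixes k :: nat and r :: real
  assumes "k \<ge> 2"
  shows "finite {z :: complex. z ^ k - z ^ (k - 1) - 1 = 0 \<and> norm z = r}
       \<and> card {z :: complex. z ^ k - z ^ (k - 1) - 1 = 0 \<and> norm z = r} \<le> 2"
proof -
  let ?S = "{z :: complex. z ^ k - z ^ (k - 1) - 1 = 0 \<and> norm z = r}"
  let ?s = "1 / r ^ (k - 1)"
  have sub: "?S \<subseteq> {z :: complex. cmod z = r \<and> cmod (z - 1) = ?s}"
  proof
    fix z assume "z \<in> ?S"
    then have e: "z ^ k - z ^ (k - 1) - 1 = 0" and n: "cmod z = r" by auto
    have kk: "z ^ k = z ^ (k-1) * z" using assms
      by (metis One_nat_def Suc_pred' le_less_trans less_numeral_extra(1) numeral_le_one_iff power_Suc2 semiring_norm(69) le_less not_le one_less_numeral_iff pos2)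
    have "z ^ (k-1) * (z - 1) = 1" using e kk by (simp add: algebra_simps)
    then have "cmod (z ^ (k-1) * (z - 1)) = 1" by simp
    then have m: "r ^ (k-1) * cmod (z - 1) = 1" using n by (simp add: norm_mult norm_power)
    then have "r ^ (k-1) \<noteq> 0" by (metis mult_zero_left zero_neq_one)
    then have "cmod (z - 1) = ?s" using m by (simp add: field_simps)
    then show "z \<in> {z :: complex. cmod z = r \<and> cmod (z - 1) = ?s}" using n by simp
  qed
  note S2 = subset_trans[OF sub two_circles]
  have "finite ?S" using S2 finite_subset by blast
  moreover have "card ?S \<le> 2"
  proof -
    have c2: "\<And>a b :: complex. card {a, b} \<le> 2" by (simp add: card_insert_if)
    show ?thesis using card_mono[OF _ S2] c2 le_trans by blast
  qed
  ultimately show ?thesis by blast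
qed

end
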